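(* For every $m\ge0$ and $n\ge1$ there is an injective map from $Q_2(m,n)$ to $P_2(-m,n)$.
   Context: Partitions: $\lambda_1\ge\cdots\ge\lambda_\ell>0$, $\ell(\lambda)=\ell$, $\lambda_i=0$ for $i>\ell$ (so $\alpha_1=0$ if $\alpha=\emptyset$), $s(\lambda)$ the smallest part with $s(\emptyset)=+\infty$. Rank $=\lambda_1-\ell$; rank-set $=[-\lambda_1,1-\lambda_2,\dots,\ell-1-\lambda_\ell,\ell,\ell+1,\dots]$. $Q(m,n)$: partitions of $n$ whose rank-set contains $m$; $P(-m,n)$: partitions of $n$ with rank $\ge-m$. $m$-Durfee rectangle symbol $(\alpha,\beta)_{(m+j)\times j}$ of $\lambda$: $j\ge0$ is the largest integer with $\lambda_{m+j}\ge j$; $\alpha$ is the conjugate of $(\lambda_1-j,\dots,\lambda_{m+j}-j)$ (columns to the right of the $(m+j)\times j$ rectangle) and $\beta=(\lambda_{m+j+1},\lambda_{m+j+2},\dots)$ (rows below it); $|\lambda|=|\alpha|+|\beta|+j(m+j)$. $Q_2(m,n)$ is the set of $\lambda\in Q(m,n)$ whose symbol $(\alpha,\beta)_{(m+j)\times j}$ has $j\ge1$, $\ell(\beta)\ge\ell(\alpha)$ and $\alpha_1<m+j$. $P_2(-m,n)$ is the set of $\mu\in P(-m,n)$ whose symbol $(\gamma,\delta)_{(m+j')\times j'}$ has $j'\ge1$ and $\delta_1=j'-1$. *)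

theory Defs
  imports Main
begin

definition is_partition :: "nat list \<Rightarrow> bool" where
  "is_partition xs \<longleftrightarrow> sorted_wrt (\<ge>) xs \<and> 0 \<notin> set xs"

definition partitions :: "nat \<Rightarrow> nat list set" where
  "partitions n = {xs. is_partition xs \<and> sum_list xs = n}"

text \<open>1-indexed parts, with part i = 0 for i > length (and for i = 0).\<close>
definition part :: "nat list \<Rightarrow> nat \<Rightarrow> nat" where
  "part xs i = (if 1 \<le> i \<and> i \<le> length xs then xs ! (i - 1) else 0)"

definition rank :: "nat list \<Rightarrow> int" where
  "rank xs = int (part xs 1) - int (length xs)"

definition rank_set :: "nat list \<Rightarrow> int set" where
  "rank_set xs = {int (i - 1) - int (part xs i) | i. 1 \<le> i \<and> i \<le> length xs}
                 \<union> {int k | k. length xs \<le> k}"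

definition Qset :: "nat \<Rightarrow> nat \<Rightarrow> nat list set" where
  "Qset m n = {xs \<in> partitions n. int m \<in> rank_set xs}"

text \<open>P(-m,n): partitions of n with rank at least -m.\<close>
definition Pset :: "nat \<Rightarrow> nat \<Rightarrow> nat list set" where
  "Pset m n = {xs \<in> partitions n. rank xs \<ge> - int m}"

definition conj :: "nat list \<Rightarrow> nat list" where
  "conj xs = map (\<lambda>k. length (filter (\<lambda>x. k \<le> x) xs)) [1..<Suc (fold max xs 0)]"

text \<open>m-Durfee rectangle symbol (alpha, beta) of size (m+j) x j.\<close>
definition durj :: "nat \<Rightarrow> nat list \<Rightarrow> nat" where
  "durj m xs = (GREATEST j. part xs (m + j) \<ge> j)"

definition dur_alpha :: "nat \<Rightarrow> nat list \<Rightarrow> nat list" where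
  "dur_alpha m xs = (let j = durj m xs in conj (map (\<lambda>i. part xs i - j) [1..<Suc (m + j)]))"

definition dur_beta :: "nat \<Rightarrow> nat list \<Rightarrow> nat list" where
  "dur_beta m xs = drop (m + durj m xs) xs"

definition Q2set :: "nat \<Rightarrow> nat \<Rightarrow> nat list set" where
  "Q2set m n = {xs \<in> Qset m n. durj m xs \<ge> 1
      \<and> length (dur_beta m xs) \<ge> length (dur_alpha m xs)
      \<and> part (dur_alpha m xs) 1 < m + durj m xs}"

definition P2set :: "nat \<Rightarrow> nat \<Rightarrow> nat list set" where
  "P2set m n = {xs \<in> Pset m n. durj m xs \<ge> 1
      \<and> part (dur_beta m xs) 1 = durj m xs - 1}"

end

theory Submission
  imports Defs
begin

lemma part_mono:
  assumes "is_partition xs" "1 \<le> i" "i \<le> i'"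
  shows "part xs i' \<le> part xs i"
proof (cases "i' \<le> length xs")
  case True
  have s: "sorted_wrt (\<ge>) xs" using assms(1) by (simp add: is_partition_def)
  show ?thesis
  proof (cases "i = i'")
    case False
    then have "i - 1 < i' - 1" using assms by simp
    then have "xs ! (i' - 1) \<le> xs ! (i - 1)" using sorted_wrt_nth_less[OF s, of "i-1" "i'-1"] True assms by simp
    then show ?thesis using True assms by (simp add: part_def)
  qed simp
next
  case False
  then show ?thesis by (simp add: part_def)
qed

lemma part_le_sum: "part xs i \<le> sum_list xs"
  unfolding part_def by (auto intro!: elem_le_sum_list)

lemma part_drop: "1 \<le> i \<Longrightarrow> part xs (k + i) = part (drop k xs) i"
  by (auto simp: part_def add.commute)

lemma durj_props:
  assumes "is_partition xs"
  shows "durj m xs \<le> part xs (m + durj m xs)" "part xs (m + durj m xs + 1) \<le> durj m xs"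
proof -
  let ?P = "\<lambda>j. j \<le> part xs (m + j)"
  have b: "\<And>y. ?P y \<Longrightarrow> y \<le> sum_list xs" using part_le_sum order_trans by blast
  have p0: "?P 0" by simp
  show "durj m xs \<le> part xs (m + durj m xs)"
    unfolding durj_def using GreatestI_nat[of ?P 0 "sum_list xs", OF p0 b] by simp
  show "part xs (m + durj m xs + 1) \<le> durj m xs"
  proof (rule ccontr)
    assume "\<not> ?thesis"
    then have "?P (durj m xs + 1)" by simp
    then have "durj m xs + 1 \<le> durj m xs"
      unfolding durj_def using Greatest_le_nat[of ?P "durj m xs + 1" "sum_list xs", OF _ b]
      by (simp add: durj_def)
    then show False by simp
  qed
qed

lemma durj_eq:
  assumes "is_partition xs" "j \<le> part xs (m + j)" "part xs (m + j + 1) \<le> j"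
  shows "durj m xs = j"
  unfolding durj_def
proof (rule Greatest_equality)
  show "j \<le> part xs (m + j)" by fact
  fix y assume y: "y \<le> part xs (m + y)"
  show "y \<le> j"
  proof (rule ccontr)
    assume "\<not> y \<le> j"
    then have "part xs (m + y) \<le> part xs (m + j + 1)" using part_mono[OF assms(1), of "m+j+1" "m+y"] by simp
    then show False using y assms(3) \<open>\<not> y \<le> j\<close> by simp
  qed
qed

lemma fold_max_ge: "a \<le> fold max ys (a::nat) \<and> (\<forall>x\<in>set ys. x \<le> fold max ys a)"
proof (induction ys arbitrary: a)
  case Nil then show ?case by simp
next
  case (Cons y ys)
  from Cons[of "max y a"] show ?case by auto
qed

lemma Q2_facts:
  assumes "xs \<in> Q2set m n"
  defines "j \<equiv> durj m xs"
  shows "is_partition xs" "sum_list xs = n" "1 \<le> j" "m + j + 1 \<le> length xs"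
    "xs ! (m + j - 1) = j" "xs ! (m + j) = j" "xs ! 0 \<le> j + (length xs - (m + j))"
proof -
  have xQ: "xs \<in> Qset m n" and j1: "1 \<le> j" and lab: "length (dur_alpha m xs) \<le> length (dur_beta m xs)"
    and a1: "part (dur_alpha m xs) 1 < m + j"
    using assms by (auto simp: Q2set_def)
  have P: "is_partition xs" "sum_list xs = n" "int m \<in> rank_set xs" using xQ by (auto simp: Qset_def partitions_def)
  show "is_partition xs" "sum_list xs = n" "1 \<le> j" using P j1 by auto
  let ?k = "m + j"
  have d1: "j \<le> part xs ?k" and d2: "part xs (?k + 1) \<le> j" using durj_props[OF P(1), of m] unfolding j_def by auto
  have klen: "?k \<le> length xs" using d1 j1 by (auto simp: part_def split: if_splits)
  have pk1: "part xs (?k + 1) = j"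
  proof -
    from P(3) consider (a) i where "1 \<le> i" "i \<le> length xs" "int m = int (i - 1) - int (part xs i)"
      | (b) kk where "length xs \<le> kk" "int m = int kk" unfolding rank_set_def by blast
    then show ?thesis
    proof cases
      case b then show ?thesis using klen j1 by simp
    next
      case a
      show ?thesis
      proof (cases "i \<le> ?k")
        case True
        then have "part xs ?k \<le> part xs i" using part_mono[OF P(1) a(1) True] by simp
        then show ?thesis using a d1 True by simp
      next
        case False
        then have "part xs i \<le> part xs (?k+1)" using part_mono[OF P(1), of "?k+1" i] by simp
        then have "i = ?k + 1" using a d2 False by simp
        then show ?thesis using a by simp
      qed
    qed
  qed
  then show klen1: "m + j + 1 \<le> length xs" using j1 by (auto simp: part_def split: if_splits)
  show "xs ! (m + j) = j" using pk1 klen1 by (simp add: part_def)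
  define ys where "ys = map (\<lambda>i. part xs i - j) [1..<Suc ?k]"
  have al: "dur_alpha m xs = conj ys" unfolding dur_alpha_def ys_def j_def by (simp add: Let_def)
  have ysl: "length ys = ?k" unfolding ys_def using j1 by simp
  have ys0: "ys ! 0 = part xs 1 - j" unfolding ys_def using j1 by (simp add: nth_map_upt del: upt_Suc)
  have fm: "ys ! 0 \<le> fold max ys 0" using fold_max_ge[of 0 ys] ysl j1
    by (metis add_gr_0 less_numeral_extra(1) less_le_trans nth_mem)
  have pkj: "part xs ?k = j"
  proof (rule ccontr)
    assume "part xs ?k \<noteq> j"
    then have gt: "j < part xs ?k" using d1 by simp
    have all: "\<forall>x\<in>set ys. 1 \<le> x"
    proof
      fix x assume "x \<in> set ys"
      then obtain i where i: "1 \<le> i" "i \<le> ?k" "x = part xs i - j" unfolding ys_def by auto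
      have "part xs ?k \<le> part xs i" using part_mono[OF P(1) i(1) i(2)] .
      then show "1 \<le> x" using gt i by simp
    qed
    have "1 \<le> ys ! 0" using all ysl j1 by (metis add_gr_0 less_le_trans nth_mem zero_less_one)
    then have "1 \<le> fold max ys 0" using fm by simp
    then have "part (conj ys) 1 = length (filter (\<lambda>x. 1 \<le> x) ys)"
      unfolding conj_def part_def by (simp add: nth_map_upt del: upt_Suc)
    also have "\<dots> = ?k" using all ysl by simp
    finally show False using a1 al by simp
  qed
  then show "xs ! (m + j - 1) = j" using klen j1 by (simp add: part_def)
  have "length (dur_alpha m xs) = fold max ys 0" unfolding al conj_def by simp
  moreover have "length (dur_beta m xs) = length xs - ?k" unfolding dur_beta_def j_def by simp
  ultimately have "part xs 1 - j \<le> length xs - ?k" using lab fm ys0 by simp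
  then show "xs ! 0 \<le> j + (length xs - (m + j))" using klen1 by (simp add: part_def)
qed

definition dl :: "nat list \<Rightarrow> nat list" where
  "dl b = filter (\<lambda>x. 0 < x) (map (\<lambda>x. x - 1) b)"

lemma dl_restore:
  "sorted_wrt (\<ge>) b \<Longrightarrow> \<forall>x\<in>set b. 1 \<le> x \<Longrightarrow>
   map Suc (dl b) @ replicate (length b - length (dl b)) 1 = b"
proof (induction b)
  case Nil then show ?case by (simp add: dl_def)
next
  case (Cons y ys)
  show ?case
  proof (cases "2 \<le> y")
    case True
    have "length (dl ys) \<le> length ys" by (simp add: dl_def)
    then show ?thesis using Cons True by (simp add: dl_def Suc_diff_le)
  next
    case False
    then have y: "y = 1" using Cons by auto
    have a: "\<forall>x\<in>set ys. x = 1" using Cons y by fastforce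
    then have "dl ys = []" by (auto simp: dl_def filter_empty_conv)
    then show ?thesis using y a replicate_length_same[of ys 1] by (simp add: dl_def)
  qed
qed

lemma dl_sum: "\<forall>x\<in>set b. 1 \<le> x \<Longrightarrow> sum_list (dl b) + length b = sum_list b"
  by (induction b) (auto simp: dl_def)

lemma dl_len: "length (dl b) \<le> length b"
  by (simp add: dl_def le_trans[OF length_filter_le])

lemma dl_sorted: "sorted_wrt (\<ge>) b \<Longrightarrow> sorted_wrt (\<ge>) (dl b)"
proof -
  assume s: "sorted_wrt (\<ge>) b"
  have "sorted_wrt (\<ge>) (map (\<lambda>x. x - 1) b)"
    unfolding sorted_wrt_map using s by (rule sorted_wrt_mono_rel[rotated]) simp
  then show ?thesis unfolding dl_def by (rule sorted_wrt_filter)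
qed

lemma dl_set: "x \<in> set (dl b) \<Longrightarrow> \<exists>y\<in>set b. x = y - 1 \<and> 0 < x"
  by (auto simp: dl_def)

lemma dl_head:
  assumes "sorted_wrt (\<ge>) (j # b)" "\<forall>x\<in>set (j#b). 1 \<le> x"
  shows "part (dl (j # b)) 1 = j - 1"
proof (cases "2 \<le> j")
  case True then show ?thesis by (simp add: dl_def part_def)
next
  case False
  then have "j = 1" using assms by auto
  then have "dl (j # b) = []" using assms by (auto simp: dl_def filter_empty_conv)
  then show ?thesis using \<open>j = 1\<close> by (simp add: part_def)
qed

definition F :: "nat \<Rightarrow> nat list \<Rightarrow> nat list" where
  "F m xs = (let j = durj m xs; k = m + j; b = drop k xs in ((j + length b) # take (k - 1) xs) @ dl b)"

definition G :: "nat \<Rightarrow> nat list \<Rightarrow> nat list" where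
  "G m ys = (let j = durj m ys; k = m + j; d = drop k ys in
     take (k - 1) (tl ys) @ j # map Suc d @ replicate (hd ys - j - length d) 1)"

lemma F_props:
  assumes xQ: "xs \<in> Q2set m n"
  shows "F m xs \<in> P2set m n \<and> G m (F m xs) = xs"
proof -
  define j where "j = durj m xs"
  define k where "k = m + j"
  define A where "A = take (k - 1) xs"
  define b where "b = drop k xs"
  define L where "L = length b"
  define \<delta> where "\<delta> = dl b"
  define \<mu> where "\<mu> = ((j + L) # A) @ \<delta>"
  have Fx: "F m xs = \<mu>" unfolding F_def \<mu>_def \<delta>_def L_def b_def A_def k_def j_def by (simp add: Let_def)
  note QF = Q2_facts[OF xQ, folded j_def k_def]
  have P: "is_partition xs" and sx: "sum_list xs = n" and j1: "1 \<le> j" and klen: "k + 1 \<le> length xs"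
    and xk1: "xs ! (k - 1) = j" and xk: "xs ! k = j" and x0: "xs ! 0 \<le> j + L"
    using QF by (auto simp: L_def b_def)
  have s: "sorted_wrt (\<ge>) xs" and nz: "0 \<notin> set xs" using P by (auto simp: is_partition_def)
  have k1: "1 \<le> k" using j1 k_def by simp
  have xs_dec: "xs = A @ j # b" using id_take_nth_drop[of "k-1" xs] klen k1 xk1
    by (simp add: A_def b_def)
  have b_dec: "b = j # drop (k+1) xs" unfolding b_def using klen xk Cons_nth_drop_Suc[of k xs] by simp
  have sb: "sorted_wrt (\<ge>) b" unfolding b_def using s by (rule sorted_wrt_drop)
  have b1: "\<forall>x\<in>set b. 1 \<le> x" using nz unfolding b_def by (metis in_set_dropD less_one not_le)
  have bj: "\<forall>x\<in>set b. x \<le> j" using sb b_dec by (metis order_refl set_ConsD sorted_wrt.simps(2))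
  have lenA: "length A = k - 1" unfolding A_def using klen by simp
  have Aset: "\<forall>x\<in>set A. j \<le> x \<and> x \<le> xs ! 0"
  proof
    fix x assume "x \<in> set A"
    then obtain i where i: "i < k - 1" "x = A ! i" using lenA by (auto simp: in_set_conv_nth)
    then have xi: "x = xs ! i" by (simp add: A_def)
    have "xs ! (k - 1) \<le> xs ! i" using sorted_wrt_nth_less[OF s i(1)] klen by simp
    moreover have "xs ! i \<le> xs ! 0" using sorted_wrt_nth_less[OF s, of 0 i] klen i by (cases "i = 0") auto
    ultimately show "j \<le> x \<and> x \<le> xs ! 0" using xi xk1 by simp
  qed
  have dset: "\<forall>x\<in>set \<delta>. 0 < x \<and> x \<le> j - 1" using bj unfolding \<delta>_def using dl_set by fastforce
  have sA: "sorted_wrt (\<ge>) A" unfolding A_def using s by (rule sorted_wrt_take)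
  have sd: "sorted_wrt (\<ge>) \<delta>" unfolding \<delta>_def using sb by (rule dl_sorted)
  have ldl: "length \<delta> \<le> L" unfolding \<delta>_def L_def by (rule dl_len)
  have smu: "sorted_wrt (\<ge>) \<mu>"
  proof -
    have "sorted_wrt (\<ge>) (A @ \<delta>)" unfolding sorted_wrt_append using sA sd Aset dset
      by (meson diff_le_self le_trans)
    moreover have "\<forall>y\<in>set (A @ \<delta>). y \<le> j + L" using Aset dset x0 by fastforce
    ultimately show ?thesis unfolding \<mu>_def by simp
  qed
  have nzmu: "0 \<notin> set \<mu>" unfolding \<mu>_def using Aset dset j1 by fastforce
  have Pmu: "is_partition \<mu>" using smu nzmu by (simp add: is_partition_def)
  have summu: "sum_list \<mu> = n"
  proof -
    have "sum_list \<delta> + L = sum_list b" unfolding \<delta>_def L_def using b1 by (rule dl_sum)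
    moreover have "sum_list xs = sum_list A + j + sum_list b" by (subst xs_dec) simp
    ultimately show ?thesis unfolding \<mu>_def using sx by simp
  qed
  have lenpre: "length ((j + L) # A) = k" using lenA k1 by simp
  have dropmu: "drop k \<mu> = \<delta>" unfolding \<mu>_def using lenpre by (metis append_eq_conv_conj)
  have pd: "part \<delta> 1 = j - 1" using dl_head[of j "drop (k+1) xs"] sb b1 unfolding \<delta>_def b_dec[symmetric] by blast
  have pmk: "j \<le> part \<mu> (m + j)"
  proof -
    have "\<mu> ! (k - 1) = ((j + L) # A) ! (k - 1)" unfolding \<mu>_def using nth_append[of "(j+L)#A" \<delta> "k-1"] lenpre k1 by (simp del: append_Cons)
    moreover have "((j + L) # A) ! (k - 1) \<in> set ((j + L) # A)" using lenpre k1 by (intro nth_mem) simp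
    ultimately have "j \<le> \<mu> ! (k - 1)" using Aset by auto
    moreover have "k \<le> length \<mu>" unfolding \<mu>_def using lenpre by simp
    ultimately show ?thesis using k1 by (simp add: part_def k_def)
  qed
  have pmk1: "part \<mu> (m + j + 1) = j - 1" using part_drop[of 1 \<mu> k] dropmu pd by (simp add: k_def)
  have dmu: "durj m \<mu> = j" using durj_eq[OF Pmu pmk] pmk1 by simp
  have rk: "rank \<mu> \<ge> - int m"
  proof -
    have "part \<mu> 1 = j + L" unfolding \<mu>_def by (simp add: part_def)
    moreover have "length \<mu> = k + length \<delta>" unfolding \<mu>_def using lenpre by simp
    ultimately show ?thesis unfolding rank_def using ldl k_def by simp
  qed
  have "\<mu> \<in> P2set m n"
    unfolding P2set_def Pset_def partitions_def dur_beta_def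
    using Pmu summu rk dmu j1 dropmu pd by (simp add: k_def)
  moreover have "G m \<mu> = xs"
  proof -
    have "take (k - 1) (tl \<mu>) = A" unfolding \<mu>_def using lenA by simp
    moreover have "hd \<mu> - j - length \<delta> = L - length \<delta>" unfolding \<mu>_def by simp
    moreover have "map Suc \<delta> @ replicate (L - length \<delta>) 1 = b" unfolding \<delta>_def L_def using sb b1 by (rule dl_restore)
    moreover have "length \<mu> - (m + j) = length \<delta>" using dropmu k_def by (metis length_drop)
    ultimately show ?thesis unfolding G_def using dmu dropmu xs_dec by (simp add: Let_def k_def)
  qed
  ultimately show ?thesis using Fx by simp
qed

theorem lemma4p2:
  fixes m n :: nat
  assumes "n \<ge> 1"
  shows "\<exists>f. inj_on f (Q2set m n) \<and> f ` Q2set m n \<subseteq> P2set m n"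
proof (intro exI conjI)
  show "inj_on (F m) (Q2set m n)" by (rule inj_on_inverseI[where g = "G m"]) (use F_props in blast)
  show "F m ` Q2set m n \<subseteq> P2set m n" using F_props by blast
qed

end
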